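(* Let $m\ge0$ be an integer and write $s_n=s_n^{(1,m+2)}$. Then for all $n\ge0$ and $j=0,\ldots,m+1$, \[ s_{n(m+2)+j}^2=\delta_{j,0}+(1-\delta_{j,0})s_{j-1}^2+\sum_{k=1}^n\left\{s_{k(m+2)+j-1}^2+2\sum_{i=0}^{(k-1)(m+2)+j}P_{k(m+2)+j-1-i}^{\{-2,-1,m\}}s_i^2\right\}. \]
   Context: For positive integers $p<q$, $s_n^{(p,q)}$ is defined by $s_n^{(p,q)}=\delta_{0,n}+s_{n-p}^{(p,q)}+s_{n-q}^{(p,q)}$ for $n\ge0$ and $s_n^{(p,q)}=0$ for $n<0$. $\delta_{i,j}$ is $1$ if $i=j$ and $0$ otherwise. For a finite set $W$ of integers, $P_n^W$ is the number of permutations $\pi$ of $\{1,\dots,n\}$ with $\pi(i)-i\in W$ for all $i$ (the permanent of the $n\times n$ $(0,1)$ Toeplitz matrix whose $(i,j)$ entry is $1$ iff $j-i\in W$), with $P_0^W=1$. Empty sums are $0$. *)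

theory Defs
  imports "HOL-Combinatorics.Permutations"
begin

definition kdelta :: "int \<Rightarrow> int \<Rightarrow> int" where
  "kdelta i j = (if i = j then 1 else 0)"

function s_nat :: "nat \<Rightarrow> nat \<Rightarrow> nat \<Rightarrow> nat" where
  "s_nat p q n = (if n = 0 then 1 else 0)
      + (if 0 < p \<and> p \<le> n then s_nat p q (n - p) else 0)
      + (if 0 < q \<and> q \<le> n then s_nat p q (n - q) else 0)"
  by pat_completeness auto
termination by (relation "measure (\<lambda>(p,q,n). n)") auto

definition sseq :: "nat \<Rightarrow> nat \<Rightarrow> int \<Rightarrow> int" where
  "sseq p q n = (if n < 0 then 0 else int (s_nat p q (nat n)))"

definition Pperm :: "int set \<Rightarrow> nat \<Rightarrow> nat" where
  "Pperm W n = card {\<pi>. \<pi> permutes {1..n} \<and> (\<forall>i\<in>{1..n}. int (\<pi> i) - int i \<in> W)}"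

end

theory Submission
  imports Defs "HOL-Library.FuncSet"
begin

definition okS :: "nat \<Rightarrow> nat \<Rightarrow> nat \<Rightarrow> nat set \<Rightarrow> (nat \<Rightarrow> nat) set" where
  "okS m p L T = {f. bij_betw f {p..<p+L} T \<and> (\<forall>x. x \<notin> {p..<p+L} \<longrightarrow> f x = x)
      \<and> (\<forall>i\<in>{p..<p+L}. int (f i) - int i \<in> {-2,-1,int m})}"

lemma okS_finite:
  assumes "finite T" shows "finite (okS m p L T)"
proof -
  let ?P = "{p..<p+L}"
  have inj: "inj_on (\<lambda>f. restrict f ?P) (okS m p L T)"
  proof (rule inj_onI)
    fix f g assume f: "f \<in> okS m p L T" and g: "g \<in> okS m p L T"
      and e: "restrict f ?P = restrict g ?P"
    show "f = g"
    proof
      fix x show "f x = g x"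
      proof (cases "x \<in> ?P")
        case True then show ?thesis using e by (metis restrict_apply')
      next
        case False then show ?thesis using f g by (simp add: okS_def)
      qed
    qed
  qed
  have "(\<lambda>f. restrict f ?P) ` okS m p L T \<subseteq> (\<Pi>\<^sub>E i\<in>?P. T)"
    by (auto simp: okS_def bij_betw_def)
  moreover have "finite (\<Pi>\<^sub>E i\<in>?P. T)" using assms by (simp add: finite_PiE)
  ultimately show ?thesis using inj finite_imageD finite_subset by metis
qed

lemma okS_zero: "okS m p 0 T = (if T = {} then {id} else {})"
  by (auto simp: okS_def bij_betw_def fun_eq_iff)

lemma okS_empty_low:
  assumes "t \<in> T" "t + 2 < p" shows "okS m p L T = {}"
proof (rule ccontr)
  assume "okS m p L T \<noteq> {}"
  then obtain f where f: "f \<in> okS m p L T" by blast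
  then have "t \<in> f ` {p..<p+L}" using assms by (auto simp: okS_def bij_betw_def)
  then obtain i where i: "i \<in> {p..<p+L}" "f i = t" by blast
  then have "int t - int i \<in> {-2,-1,int m}" using f by (auto simp: okS_def)
  then show False using i assms by auto
qed

lemma okS_fix:
  assumes L: "L \<ge> 1" and t: "t \<in> T" "int t - int p \<in> {-2,-1,int m}"
  shows "card {f \<in> okS m p L T. f p = t} = card (okS m (p+1) (L-1) (T - {t}))"
proof -
  have P: "{p+1..<p+1+(L-1)} = {p..<p+L} - {p}" using L by auto
  have P2: "{p..<p+L} = insert p {p+1..<p+1+(L-1)}" using L by auto
  show ?thesis
  proof (rule bij_betw_same_card, rule bij_betw_byWitness[where f'="\<lambda>g. g(p := t)"])
    show "\<forall>a\<in>{f \<in> okS m p L T. f p = t}. (a(p := p))(p := t) = a" by auto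
    show "\<forall>a'\<in>okS m (p + 1) (L - 1) (T - {t}). (a'(p := t))(p := p) = a'"
      by (auto simp: okS_def fun_eq_iff)
    show "(\<lambda>f. f(p := p)) ` {f \<in> okS m p L T. f p = t} \<subseteq> okS m (p + 1) (L - 1) (T - {t})"
    proof (rule image_subsetI)
      fix f assume "f \<in> {f \<in> okS m p L T. f p = t}"
      then have f: "f \<in> okS m p L T" "f p = t" by auto
      have b: "bij_betw f {p..<p+L} T" using f by (simp add: okS_def)
      have "bij_betw f ({p..<p+L} - {p}) (T - {t})"
        using b f(2) L by (intro bij_betw_DiffI[OF b]) (auto simp: bij_betw_def)
      then have "bij_betw (f(p := p)) {p+1..<p+1+(L-1)} (T - {t})"
        unfolding P by (rule bij_betw_cong[THEN iffD1, rotated]) auto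
      moreover have "\<forall>x. x \<notin> {p+1..<p+1+(L-1)} \<longrightarrow> (f(p := p)) x = x"
        using f(1) L by (auto simp: okS_def)
      moreover have "\<forall>i\<in>{p+1..<p+1+(L-1)}. int ((f(p := p)) i) - int i \<in> {-2,-1,int m}"
        using f(1) L by (auto simp: okS_def)
      ultimately show "f(p := p) \<in> okS m (p + 1) (L - 1) (T - {t})"
        unfolding okS_def mem_Collect_eq by blast
    qed
    show "(\<lambda>g. g(p := t)) ` okS m (p + 1) (L - 1) (T - {t}) \<subseteq> {f \<in> okS m p L T. f p = t}"
    proof (rule image_subsetI)
      fix g assume g: "g \<in> okS m (p + 1) (L - 1) (T - {t})"
      have b: "bij_betw g {p+1..<p+1+(L-1)} (T - {t})" using g by (simp add: okS_def)
      have "bij_betw (g(p := t)) {p+1..<p+1+(L-1)} (T - {t})"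
        by (rule bij_betw_cong[THEN iffD1, OF _ b]) auto
      then have "bij_betw (g(p := t)) ({p+1..<p+1+(L-1)} \<union> {p}) ((T - {t}) \<union> {(g(p := t)) p})"
        by (intro notIn_Un_bij_betw) auto
      moreover have "{p+1..<p+1+(L-1)} \<union> {p} = {p..<p+L}" using P2 by auto
      moreover have "(T - {t}) \<union> {(g(p := t)) p} = T" using t by auto
      ultimately have "bij_betw (g(p := t)) {p..<p+L} T" by simp
      moreover have "\<forall>x. x \<notin> {p..<p+L} \<longrightarrow> (g(p := t)) x = x"
        using g L by (auto simp: okS_def)
      moreover have "\<forall>i\<in>{p..<p+L}. int ((g(p := t)) i) - int i \<in> {-2,-1,int m}"
        using g t L P2 by (auto simp: okS_def)
      ultimately show "g(p := t) \<in> {f \<in> okS m p L T. f p = t}"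
        unfolding okS_def mem_Collect_eq by simp
    qed
  qed
qed

lemma okS_step:
  assumes L: "L \<ge> 1" and fin: "finite T"
  shows "card (okS m p L T) = (\<Sum>t \<in> T \<inter> {t. int t - int p \<in> {-2,-1,int m}}. card (okS m (p+1) (L-1) (T - {t})))"
proof -
  let ?C = "T \<inter> {t. int t - int p \<in> {-2,-1,int m}}"
  have eq: "okS m p L T = (\<Union>t\<in>?C. {f \<in> okS m p L T. f p = t})"
  proof
    show "okS m p L T \<subseteq> (\<Union>t\<in>?C. {f \<in> okS m p L T. f p = t})"
    proof
      fix f assume f: "f \<in> okS m p L T"
      have pin: "p \<in> {p..<p+L}" using L by auto
      have "f p \<in> T" using f pin by (auto simp: okS_def bij_betw_def)
      moreover have "int (f p) - int p \<in> {-2,-1,int m}" using f pin unfolding okS_def by blast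
      ultimately show "f \<in> (\<Union>t\<in>?C. {f \<in> okS m p L T. f p = t})" using f by blast
    qed
  qed blast
  have "card (\<Union>t\<in>?C. {f \<in> okS m p L T. f p = t}) = (\<Sum>t\<in>?C. card {f \<in> okS m p L T. f p = t})"
    by (rule card_UN_disjoint) (use fin okS_finite[OF fin] in auto)
  also have "\<dots> = (\<Sum>t\<in>?C. card (okS m (p+1) (L-1) (T - {t})))"
    by (rule sum.cong) (use okS_fix[OF L] in auto)
  finally show ?thesis using eq by simp
qed

lemma okS_forced:
  assumes L: "L \<ge> 1" and fin: "finite T" and p: "p \<ge> 2" and t: "p - 2 \<in> T"
  shows "card (okS m p L T) = card (okS m (p+1) (L-1) (T - {p-2}))"
proof -
  let ?C = "T \<inter> {t. int t - int p \<in> {-2,-1,int m}}"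
  let ?g = "\<lambda>t. card (okS m (p+1) (L-1) (T - {t}))"
  have C: "p - 2 \<in> ?C" using t p by auto
  have fC: "finite ?C" using fin by auto
  have "card (okS m p L T) = sum ?g ?C" by (rule okS_step[OF L fin])
  also have "\<dots> = ?g (p-2) + sum ?g (?C - {p-2})" by (rule sum.remove[OF fC C])
  also have "sum ?g (?C - {p-2}) = 0"
  proof (rule sum.neutral, rule ballI)
    fix x assume x: "x \<in> ?C - {p-2}"
    have "okS m (p+1) (L-1) (T - {x}) = {}"
      by (rule okS_empty_low[of "p-2"]) (use x t p in auto)
    then show "?g x = 0" by simp
  qed
  finally show ?thesis by simp
qed

lemma okS_chain:
  "p \<ge> 2 \<Longrightarrow> k \<le> L \<Longrightarrow> finite T \<Longrightarrow> {p-2..<p-2+k} \<subseteq> T \<Longrightarrow>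
    card (okS m p L T) = card (okS m (p+k) (L-k) (T - {p-2..<p-2+k}))"
proof (induction k arbitrary: p L T)
  case 0 then show ?case by simp
next
  case (Suc k)
  have "card (okS m p L T) = card (okS m (p+1) (L-1) (T - {p-2}))"
    by (rule okS_forced) (use Suc.prems in auto)
  also have "\<dots> = card (okS m (p+1+k) (L-1-k) (T - {p-2} - {p+1-2..<p+1-2+k}))"
  proof (rule Suc.IH)
    show "{p + 1 - 2..<p + 1 - 2 + k} \<subseteq> T - {p - 2}"
    proof
      fix x assume "x \<in> {p + 1 - 2..<p + 1 - 2 + k}"
      then have "x \<in> {p-2..<p-2+Suc k}" "x \<noteq> p - 2" using Suc.prems(1) by auto
      then show "x \<in> T - {p - 2}" using Suc.prems(4) by blast
    qed
  qed (use Suc.prems in auto)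
  also have "T - {p-2} - {p+1-2..<p+1-2+k} = T - {p-2..<p-2+Suc k}" using Suc.prems by auto
  finally show ?case by (simp add: algebra_simps)
qed

function Dm :: "nat \<Rightarrow> nat \<Rightarrow> nat \<Rightarrow> nat" where
  "Dm m k n = (if k = 0 \<or> n < k then 0 else
     (if k = 1 then (if n = 1 then 1 else 0) else Dm m (k-1) (n-1)) + Dm m (m+2-k) (n-k))"
  by pat_completeness auto
termination by (relation "measure (\<lambda>(m,k,n). n)") auto

declare Dm.simps[simp del]

lemma Dm_low: "n < k \<or> k = 0 \<Longrightarrow> Dm m k n = 0"
  by (subst Dm.simps) auto

lemma Dm_unf: "1 \<le> k \<Longrightarrow> k \<le> n \<Longrightarrow>
  Dm m k n = (if k = 1 then (if n = 1 then 1 else 0) else Dm m (k-1) (n-1)) + Dm m (m+2-k) (n-k)"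
  by (subst Dm.simps) auto

definition Bc :: "nat \<Rightarrow> nat \<Rightarrow> nat \<Rightarrow> nat \<Rightarrow> nat" where
  "Bc m a h L = card (okS m a L ({a-1..<a+L} - {a-1+h}))"

lemma Bc_zero: "a \<ge> 1 \<Longrightarrow> Bc m a h 0 = (if h = 0 then 1 else 0)"
proof -
  assume a: "a \<ge> 1"
  have "{a-1..<a+0} - {a-1+h} = (if h = 0 then {} else {a-1})" using a by auto
  then show ?thesis unfolding Bc_def by (simp add: okS_zero)
qed

lemma Bc_h0:
  assumes a: "a \<ge> 1" and L: "L \<ge> 1"
  shows "Bc m a 0 L = (if m+1 \<le> L then Bc m (a+1) m (L-1) else 0)"
proof -
  let ?T = "{a-1..<a+L} - {a-1+0}"
  have C: "?T \<inter> {t. int t - int a \<in> {-2,-1,int m}} = (if m+1 \<le> L then {a+m} else {})"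
    using a by auto
  have "Bc m a 0 L = (\<Sum>t \<in> ?T \<inter> {t. int t - int a \<in> {-2,-1,int m}}. card (okS m (a+1) (L-1) (?T - {t})))"
    unfolding Bc_def by (rule okS_step[OF L]) simp
  also have "\<dots> = (if m+1 \<le> L then card (okS m (a+1) (L-1) (?T - {a+m})) else 0)"
    unfolding C by simp
  also have "?T - {a+m} = {a+1-1..<a+1+(L-1)} - {a+1-1+m}" using a L by auto
  finally show ?thesis unfolding Bc_def by simp
qed

lemma Bc_h:
  assumes a: "a \<ge> 1" and L: "L \<ge> 1" and h: "1 \<le> h" "h \<le> m"
  shows "Bc m a h L = Bc m (a+1) (h-1) (L-1) + (if m+1 \<le> L then Bc m (a+1+h) (m-h) (L-1-h) else 0)"
proof -
  let ?T = "{a-1..<a+L} - {a-1+h}"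
  let ?g = "\<lambda>t. card (okS m (a+1) (L-1) (?T - {t}))"
  have C: "?T \<inter> {t. int t - int a \<in> {-2,-1,int m}} = (if m+1 \<le> L then {a-1, a+m} else {a-1})"
    using a h by auto
  have "Bc m a h L = sum ?g (?T \<inter> {t. int t - int a \<in> {-2,-1,int m}})"
    unfolding Bc_def by (rule okS_step[OF L]) simp
  also have "\<dots> = ?g (a-1) + (if m+1 \<le> L then ?g (a+m) else 0)"
    unfolding C using a by simp
  also have "?g (a-1) = Bc m (a+1) (h-1) (L-1)"
  proof -
    have "?T - {a-1} = {a+1-1..<a+1+(L-1)} - {a+1-1+(h-1)}" using a L h by auto
    then show ?thesis unfolding Bc_def by simp
  qed
  also have "(if m+1 \<le> L then ?g (a+m) else 0) = (if m+1 \<le> L then Bc m (a+1+h) (m-h) (L-1-h) else 0)"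
  proof (cases "m+1 \<le> L")
    case True
    have "?g (a+m) = card (okS m (a+1+h) (L-1-h) (?T - {a+m} - {a+1-2..<a+1-2+h}))"
      by (rule okS_chain) (use a h True in auto)
    also have "?T - {a+m} - {a+1-2..<a+1-2+h} = {a+1+h-1..<a+1+h+(L-1-h)} - {a+1+h-1+(m-h)}"
      using a h True by auto
    finally show ?thesis using True unfolding Bc_def by simp
  qed simp
  finally show ?thesis .
qed

lemma Bc_Dm: "a \<ge> 1 \<Longrightarrow> h \<le> m \<Longrightarrow> Bc m a h L = Dm m (h+1) (L+1)"
proof (induction L arbitrary: a h rule: less_induct)
  case (less L)
  show ?case
  proof (cases "L = 0")
    case True
    then show ?thesis using less.prems
      by (cases "h = 0") (auto simp: Bc_zero Dm_unf Dm_low)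
  next
    case False
    then have L: "L \<ge> 1" by simp
    show ?thesis
    proof (cases "h = 0")
      case True
      have "Bc m a h L = (if m+1 \<le> L then Bc m (a+1) m (L-1) else 0)"
        using Bc_h0[OF less.prems(1) L] True by simp
      also have "\<dots> = (if m+1 \<le> L then Dm m (m+1) L else 0)"
        using less.IH[of "L-1" "a+1" m] L less.prems by simp
      also have "\<dots> = Dm m (m+1) L" by (simp add: Dm_low)
      also have "\<dots> = Dm m (h+1) (L+1)" using True L by (simp add: Dm_unf)
      finally show ?thesis .
    next
      case False
      then have h1: "1 \<le> h" by simp
      have "Bc m a h L = Bc m (a+1) (h-1) (L-1) + (if m+1 \<le> L then Bc m (a+1+h) (m-h) (L-1-h) else 0)"
        by (rule Bc_h[OF less.prems(1) L h1 less.prems(2)])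
      also have "\<dots> = Dm m h L + (if m+1 \<le> L then Dm m (m-h+1) (L-h) else 0)"
        using less.IH[of "L-1" "a+1" "h-1"] less.IH[of "L-1-h" "a+1+h" "m-h"] L h1 less.prems
        by (auto simp: Suc_diff_Suc)
      also have "\<dots> = Dm m h L + Dm m (m+2-(h+1)) (L+1-(h+1))"
        using h1 less.prems by (auto simp: Dm_low Suc_diff_le)
      also have "\<dots> = Dm m (h+1) (L+1)"
      proof (cases "h \<le> L")
        case True
        have "Dm m (h+1) (L+1) = Dm m (h+1-1) (L+1-1) + Dm m (m+2-(h+1)) (L+1-(h+1))"
          using Dm_unf[of "h+1" "L+1" m] h1 True by simp
        then show ?thesis by simp
      next
        case False then show ?thesis using h1 less.prems by (simp add: Dm_low)
      qed
      finally show ?thesis .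
    qed
  qed
qed

lemma Pperm_Dm:
  assumes n: "n \<ge> 1"
  shows "Pperm {-2,-1,int m} n = Dm m (m+1) n"
proof -
  have "{\<pi>. \<pi> permutes {1..n} \<and> (\<forall>i\<in>{1..n}. int (\<pi> i) - int i \<in> {-2,-1,int m})} = okS m 1 n {1..n}"
  proof -
    have P: "{1..<1+n} = {1..n}" by auto
    show ?thesis unfolding okS_def P
      by (auto intro: bij_imp_permutes dest: permutes_imp_bij permutes_not_in)
  qed
  then have "Pperm {-2,-1,int m} n = card (okS m 1 n {1..n})" by (simp add: Pperm_def)
  also have "{1..n} = {1-1..<1+n} - {1-1+0}" by auto
  also have "card (okS m 1 n \<dots>) = Bc m 1 0 n" by (simp add: Bc_def)
  also have "\<dots> = Dm m 1 (n+1)" using Bc_Dm[of 1 0 m n] by simp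
  also have "\<dots> = Dm m (m+1) n" using n by (simp add: Dm_unf)
  finally show ?thesis .
qed

abbreviation ss :: "nat \<Rightarrow> nat \<Rightarrow> nat" where "ss m n \<equiv> s_nat 1 (m+2) n"

lemma ss_0: "ss m 0 = 1"
  by (subst s_nat.simps) simp

lemma ss_S: "n \<ge> 1 \<Longrightarrow> ss m n = ss m (n-1) + (if m+2 \<le> n then ss m (n-(m+2)) else 0)"
  by (subst s_nat.simps) simp

lemma ss_small: "n < m+2 \<Longrightarrow> ss m n = 1"
proof (induction n)
  case 0 then show ?case by (simp add: ss_0)
next
  case (Suc n) then show ?case using ss_S[of "Suc n" m] by simp
qed

lemma sum_extend0:
  fixes f :: "nat \<Rightarrow> nat"
  assumes "a \<le> b" "\<And>i. a < i \<Longrightarrow> i \<le> b \<Longrightarrow> f i = 0"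
  shows "sum f {0..b} = sum f {0..a}"
proof -
  have "sum f {0..b} = sum f {0..a} + sum f {a<..b}"
    using assms(1) by (metis atLeast0AtMost sum.ub_add_nat sum_up_index_split le_add_diff_inverse
        atLeastSucAtMost_greaterThanAtMost)
  moreover have "sum f {a<..b} = 0" using assms(2) by (intro sum.neutral) auto
  ultimately show ?thesis by simp
qed

lemma E_ident:
  "1 \<le> k \<Longrightarrow> k \<le> m+1 \<Longrightarrow> k \<le> n \<Longrightarrow>
    ss m n * ss m (n-k) = (\<Sum>i=0..n-k. ss m i ^ 2 * Dm m k (n-i))"
proof (induction n arbitrary: k rule: less_induct)
  case (less n)
  have n1: "n \<ge> 1" using less.prems by simp
  have sn: "ss m n = ss m (n-1) + (if m+2 \<le> n then ss m (n-(m+2)) else 0)"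
    by (rule ss_S[OF n1])
  show ?case
  proof (cases "k = 1")
    case True
    have A: "(\<Sum>i=0..n-1. ss m i ^ 2 * Dm m (m+1) (n-1-i)) =
             (if m+2 \<le> n then ss m (n-1) * ss m (n-(m+2)) else 0)"
    proof (cases "m+2 \<le> n")
      case True
      have "(\<Sum>i=0..n-1. ss m i ^ 2 * Dm m (m+1) (n-1-i)) = (\<Sum>i=0..n-1-(m+1). ss m i ^ 2 * Dm m (m+1) (n-1-i))"
        by (rule sum_extend0) (auto simp: Dm_low)
      also have "\<dots> = ss m (n-1) * ss m (n-1-(m+1))"
        by (rule less.IH[symmetric]) (use True in auto)
      finally show ?thesis using True by (simp add: algebra_simps)
    next
      case False
      have "(\<Sum>i=0..n-1. ss m i ^ 2 * Dm m (m+1) (n-1-i)) = 0"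
        by (rule sum.neutral) (use False in \<open>auto simp: Dm_low\<close>)
      then show ?thesis using False by simp
    qed
    have "(\<Sum>i=0..n-1. ss m i ^ 2 * Dm m 1 (n-i)) =
          (\<Sum>i=0..n-1. (if i = n-1 then ss m i ^ 2 else 0) + ss m i ^ 2 * Dm m (m+1) (n-1-i))"
    proof (rule sum.cong)
      fix i assume "i \<in> {0..n-1}"
      then have "1 \<le> n - i" using n1 by auto
      then have "Dm m 1 (n-i) = (if n - i = 1 then 1 else 0) + Dm m (m+1) (n-1-i)"
        using Dm_unf[of 1 "n-i" m] by (simp add: diff_diff_add add.commute)
      moreover have "(n - i = 1) = (i = n-1)" using \<open>1 \<le> n - i\<close> by auto
      ultimately show "ss m i ^ 2 * Dm m 1 (n-i) = (if i = n-1 then ss m i ^ 2 else 0) + ss m i ^ 2 * Dm m (m+1) (n-1-i)"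
        by (simp add: algebra_simps)
    qed simp
    also have "\<dots> = ss m (n-1) ^ 2 + (\<Sum>i=0..n-1. ss m i ^ 2 * Dm m (m+1) (n-1-i))"
      by (simp add: sum.distrib)
    finally show ?thesis using True A sn by (simp add: algebra_simps power2_eq_square)
  next
    case False
    then have k2: "k \<ge> 2" using less.prems by simp
    have B1: "ss m (n-1) * ss m (n-1-(k-1)) = (\<Sum>i=0..n-1-(k-1). ss m i ^ 2 * Dm m (k-1) (n-1-i))"
      by (rule less.IH) (use less.prems k2 in auto)
    have B2: "(if m+2 \<le> n then ss m (n-(m+2)) * ss m (n-k) else 0) =
              (\<Sum>i=0..n-k. ss m i ^ 2 * Dm m (m+2-k) (n-k-i))"
    proof (cases "m+2 \<le> n")
      case True
      have "ss m (n-k) * ss m (n-k-(m+2-k)) = (\<Sum>i=0..n-k-(m+2-k). ss m i ^ 2 * Dm m (m+2-k) (n-k-i))"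
        by (rule less.IH) (use less.prems k2 True in auto)
      also have "\<dots> = (\<Sum>i=0..n-k. ss m i ^ 2 * Dm m (m+2-k) (n-k-i))"
        by (rule sum_extend0[symmetric]) (use less.prems k2 True in \<open>auto simp: Dm_low\<close>)
      also have "n-k-(m+2-k) = n-(m+2)" using less.prems k2 True by auto
      finally show ?thesis using True by (simp add: algebra_simps)
    next
      case False
      have "(\<Sum>i=0..n-k. ss m i ^ 2 * Dm m (m+2-k) (n-k-i)) = 0"
        by (rule sum.neutral) (use False less.prems in \<open>auto simp: Dm_low\<close>)
      then show ?thesis using False by simp
    qed
    have "(\<Sum>i=0..n-k. ss m i ^ 2 * Dm m k (n-i)) =
          (\<Sum>i=0..n-k. ss m i ^ 2 * Dm m (k-1) (n-1-i) + ss m i ^ 2 * Dm m (m+2-k) (n-k-i))"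
    proof (rule sum.cong)
      fix i assume "i \<in> {0..n-k}"
      then have "k \<le> n - i" using less.prems by auto
      then have "Dm m k (n-i) = Dm m (k-1) (n-i-1) + Dm m (m+2-k) (n-i-k)"
        using Dm_unf[of k "n-i" m] False less.prems by simp
      then show "ss m i ^ 2 * Dm m k (n-i) = ss m i ^ 2 * Dm m (k-1) (n-1-i) + ss m i ^ 2 * Dm m (m+2-k) (n-k-i)"
        by (simp add: algebra_simps diff_commute)
    qed simp
    also have "\<dots> = ss m (n-1) * ss m (n-1-(k-1)) + (if m+2 \<le> n then ss m (n-(m+2)) * ss m (n-k) else 0)"
      using B1 B2 less.prems k2 by (simp add: sum.distrib)
    also have "\<dots> = ss m n * ss m (n-k)"
      using sn less.prems k2 by (simp add: algebra_simps)
    finally show ?thesis by simp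
  qed
qed

lemma KEY:
  assumes N: "N \<ge> m+2"
  shows "ss m N ^ 2 = ss m (N-(m+2)) ^ 2 + ss m (N-1) ^ 2
           + 2 * (\<Sum>i=0..N-(m+2). Pperm {-2,-1,int m} (N-1-i) * ss m i ^ 2)"
proof -
  have sn: "ss m N = ss m (N-1) + ss m (N-(m+2))" using ss_S[of N m] N by simp
  have "ss m (N-1) * ss m (N-1-(m+1)) = (\<Sum>i=0..N-1-(m+1). ss m i ^ 2 * Dm m (m+1) (N-1-i))"
    by (rule E_ident) (use N in auto)
  also have "\<dots> = (\<Sum>i=0..N-(m+2). Pperm {-2,-1,int m} (N-1-i) * ss m i ^ 2)"
  proof -
    have e: "N-1-(m+1) = N-(m+2)" by simp
    show ?thesis unfolding e
      by (rule sum.cong) (use N in \<open>auto simp: Pperm_Dm\<close>)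
  qed
  finally have X: "ss m (N-1) * ss m (N-(m+2)) = (\<Sum>i=0..N-(m+2). Pperm {-2,-1,int m} (N-1-i) * ss m i ^ 2)"
    by (simp add: diff_diff_add)
  show ?thesis unfolding sn X[symmetric] by (simp add: power2_eq_square algebra_simps)
qed

lemma sseq_nat: "sseq 1 (m+2) (int x) = int (ss m x)"
  by (simp add: sseq_def)

lemma KEYi:
  assumes N: "N \<ge> m+2"
  shows "(sseq 1 (m+2) (int N))^2 = (sseq 1 (m+2) (int (N-(m+2))))^2 +
     ((sseq 1 (m+2) (int N - 1))^2 + 2 * (\<Sum>i=0..N-(m+2). int (Pperm {-2,-1,int m} (N-1-i)) * (sseq 1 (m+2) (int i))^2))"
proof -
  have e: "int N - 1 = int (N-1)" using N by simp
  have "int (ss m N ^ 2) = int (ss m (N-(m+2)) ^ 2 + ss m (N-1) ^ 2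
           + 2 * (\<Sum>i=0..N-(m+2). Pperm {-2,-1,int m} (N-1-i) * ss m i ^ 2))"
    using KEY[OF N] by simp
  then show ?thesis unfolding e sseq_nat by (simp add: of_nat_sum algebra_simps)
qed

lemma base_case:
  assumes "j \<le> m + 1"
  shows "(sseq 1 (m+2) (int j))^2 = kdelta (int j) 0 + (1 - kdelta (int j) 0) * (sseq 1 (m+2) (int j - 1))^2"
proof -
  have j1: "ss m j = 1" by (rule ss_small) (use assms in simp)
  show ?thesis
  proof (cases "j = 0")
    case True then show ?thesis using j1 by (simp add: kdelta_def sseq_def)
  next
    case False
    then have e: "int j - 1 = int (j-1)" by simp
    have "ss m (j-1) = 1" by (rule ss_small) (use assms in simp)
    then show ?thesis unfolding e sseq_nat using j1 False by (simp add: kdelta_def)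
  qed
qed

theorem mainTheorem8:
  fixes m n j :: nat
  assumes "j \<le> m + 1"
  shows "(sseq 1 (m+2) (int (n*(m+2) + j)))^2 =
           kdelta (int j) 0 + (1 - kdelta (int j) 0) * (sseq 1 (m+2) (int j - 1))^2
           + (\<Sum>k = 1..n. (sseq 1 (m+2) (int (k*(m+2) + j) - 1))^2
               + 2 * (\<Sum>i = 0..(k-1)*(m+2) + j.
                        int (Pperm {-2, -1, int m} (k*(m+2) + j - 1 - i))
                        * (sseq 1 (m+2) (int i))^2))"
proof (induction n)
  case 0
  show ?case using base_case[OF assms] by simp
next
  case (Suc n)
  define f where "f = (\<lambda>k. (sseq 1 (m+2) (int (k*(m+2) + j) - 1))^2
               + 2 * (\<Sum>i = 0..(k-1)*(m+2) + j.
                        int (Pperm {-2, -1, int m} (k*(m+2) + j - 1 - i))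
                        * (sseq 1 (m+2) (int i))^2))"
  define base where "base = kdelta (int j) 0 + (1 - kdelta (int j) 0) * (sseq 1 (m+2) (int j - 1))^2"
  define N where "N = Suc n * (m+2) + j"
  have N: "N \<ge> m+2" by (simp add: N_def)
  have e1: "N - (m+2) = n*(m+2) + j" by (simp add: N_def)
  have e2: "(Suc n - 1)*(m+2) + j = N - (m+2)" by (simp add: N_def)
  have IH: "(sseq 1 (m+2) (int (n*(m+2) + j)))^2 = base + sum f {1..n}"
    using Suc.IH unfolding f_def base_def .
  have fS: "f (Suc n) = (sseq 1 (m+2) (int N - 1))^2 + 2 * (\<Sum>i=0..N-(m+2). int (Pperm {-2,-1,int m} (N-1-i)) * (sseq 1 (m+2) (int i))^2)"
    unfolding f_def e2 N_def by (rule refl)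
  have "(sseq 1 (m+2) (int N))^2 = (sseq 1 (m+2) (int (n*(m+2) + j)))^2 + f (Suc n)"
    using KEYi[OF N] unfolding fS e1 .
  also have "\<dots> = base + (sum f {1..n} + f (Suc n))" unfolding IH by (simp only: add.assoc)
  also have "sum f {1..n} + f (Suc n) = sum f {1..Suc n}" by simp
  finally show ?case unfolding f_def base_def N_def .
qed

end
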